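(* Let $K$ be a field with a non-trivial non-Archimedean valuation $|\cdot|$, let $X$ be a complete non-Archimedean normed space over $K$, fix $k\in\mathbb N$ with $|2k^4|\neq0$, and for $f:G\to X$ let $$\Delta f(x,y)=f(kx+y)+f(kx-y)-k^2[f(x+y)+f(x-y)]-2k^2(k^2-1)f(x)+2(k^2-1)f(y).$$ Let $\beta:[0,\infty)\to[0,\infty)$ be a function satisfying (i) $\beta(|k|t)\le\beta(|k|)\beta(t)$ for all $t\ge0$, and (ii) $\beta(|k|)<|k|^4$. Let $\delta>0$, let $G$ be a normed space, and let $f:G\to X$ satisfy $$\|\Delta f(x,y)\|\le\delta[\beta(\|x\|)+\beta(\|y\|)]\quad\text{for all }x,y\in G.$$ Then there exists a unique quartic mapping $Q:G\to X$ (i.e. $\Delta Q(x,y)=0$ for all $x,y\in G$) such that $$\|f(x)-Q(x)\|\le\frac{1}{|2k^4|}\delta\,\beta(\|x\|)\quad\text{for all }x\in G.$$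
   Context: A non-Archimedean field is a field $K$ with $|\cdot|:K\to[0,\infty)$ such that $|r|=0$ iff $r=0$, $|rs|=|r||s|$, $|r+s|\le\max\{|r|,|s|\}$. A non-Archimedean norm on a $K$-vector space satisfies $\|x\|=0$ iff $x=0$, $\|rx\|=|r|\|x\|$, $\|x+y\|\le\max\{\|x\|,\|y\|\}$. Integers are regarded as elements of $K$ and $|k|$ is the valuation of $k$ in $K$. *)

theory Defs
  imports Complex_Main
begin

definition nonarch_absval :: "('k::field \<Rightarrow> real) \<Rightarrow> bool" where
  "nonarch_absval av \<longleftrightarrow>
     (\<forall>r. av r \<ge> 0) \<and> (\<forall>r. av r = 0 \<longleftrightarrow> r = 0) \<and>
     (\<forall>r s. av (r * s) = av r * av s) \<and>
     (\<forall>r s. av (r + s) \<le> max (av r) (av s))"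

definition nontrivial_absval :: "('k::field \<Rightarrow> real) \<Rightarrow> bool" where
  "nontrivial_absval av \<longleftrightarrow> (\<exists>r. av r \<noteq> 0 \<and> av r \<noteq> 1)"

definition normed_space_over ::
  "('k::field \<Rightarrow> real) \<Rightarrow> ('k \<Rightarrow> 'v::ab_group_add \<Rightarrow> 'v) \<Rightarrow> ('v \<Rightarrow> real) \<Rightarrow> bool" where
  "normed_space_over av sc nm \<longleftrightarrow> vector_space sc \<and>
     (\<forall>x. nm x \<ge> 0) \<and> (\<forall>x. nm x = 0 \<longleftrightarrow> x = 0) \<and>
     (\<forall>r x. nm (sc r x) = av r * nm x) \<and>
     (\<forall>x y. nm (x + y) \<le> nm x + nm y)"

definition nonarch_normed_space ::
  "('k::field \<Rightarrow> real) \<Rightarrow> ('k \<Rightarrow> 'v::ab_group_add \<Rightarrow> 'v) \<Rightarrow> ('v \<Rightarrow> real) \<Rightarrow> bool" where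
  "nonarch_normed_space av sc nm \<longleftrightarrow> vector_space sc \<and>
     (\<forall>x. nm x \<ge> 0) \<and> (\<forall>x. nm x = 0 \<longleftrightarrow> x = 0) \<and>
     (\<forall>r x. nm (sc r x) = av r * nm x) \<and>
     (\<forall>x y. nm (x + y) \<le> max (nm x) (nm y))"

definition complete_wrt :: "('v::ab_group_add \<Rightarrow> real) \<Rightarrow> bool" where
  "complete_wrt nm \<longleftrightarrow>
     (\<forall>s::nat \<Rightarrow> 'v. (\<forall>e>0. \<exists>N. \<forall>m\<ge>N. \<forall>n\<ge>N. nm (s m - s n) < e) \<longrightarrow>
        (\<exists>L. (\<lambda>n. nm (s n - L)) \<longlonglongrightarrow> 0))"

definition quartic_diff ::
  "('k::field \<Rightarrow> 'g::ab_group_add \<Rightarrow> 'g) \<Rightarrow> ('k \<Rightarrow> 'x::ab_group_add \<Rightarrow> 'x) \<Rightarrow> nat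
    \<Rightarrow> ('g \<Rightarrow> 'x) \<Rightarrow> 'g \<Rightarrow> 'g \<Rightarrow> 'x" where
  "quartic_diff scG scX k f x y =
     f (scG (of_nat k) x + y) + f (scG (of_nat k) x - y)
     - scX (of_nat (k^2)) (f (x + y) + f (x - y))
     - scX (of_int (2 * int k^2 * (int k^2 - 1))) (f x)
     + scX (of_int (2 * (int k^2 - 1))) (f y)"

end

theory Submission
  imports Defs
begin


locale qctx = X: vector_space scX + G: vector_space scG
  for scX :: "'k::field \<Rightarrow> 'x::ab_group_add \<Rightarrow> 'x" and scG :: "'k \<Rightarrow> 'g::ab_group_add \<Rightarrow> 'g" +
  fixes av :: "'k \<Rightarrow> real" and nX :: "'x \<Rightarrow> real" and nG :: "'g \<Rightarrow> real"
    and k :: nat and \<beta> :: "real \<Rightarrow> real" and \<delta> :: real and f :: "'g \<Rightarrow> 'x"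
  assumes av_nonneg: "\<And>r. av r \<ge> 0" and av_zero: "\<And>r. av r = 0 \<longleftrightarrow> r = 0"
    and av_mult: "\<And>r s. av (r * s) = av r * av s"
    and av_ultra: "\<And>r s. av (r + s) \<le> max (av r) (av s)"
    and nX_nonneg: "\<And>x. nX x \<ge> 0" and nX_zero: "\<And>x. nX x = 0 \<longleftrightarrow> x = 0"
    and nX_scale: "\<And>r x. nX (scX r x) = av r * nX x"
    and nX_ultra: "\<And>x y. nX (x + y) \<le> max (nX x) (nX y)"
    and nG_zero: "\<And>x. nG x = 0 \<longleftrightarrow> x = 0"
    and nG_scale: "\<And>r x. nG (scG r x) = av r * nG x"
    and nG_nonneg: "\<And>x. nG x \<ge> 0"
    and complete: "complete_wrt nX"
    and k_ne: "av (of_nat (2 * k^4)) \<noteq> 0"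
    and \<beta>_nonneg: "\<forall>t\<ge>0. \<beta> t \<ge> 0"
    and \<beta>1: "\<forall>t\<ge>0. \<beta> (av (of_nat k) * t) \<le> \<beta> (av (of_nat k)) * \<beta> t"
    and \<beta>2: "\<beta> (av (of_nat k)) < av (of_nat k) ^ 4"
    and \<delta>: "\<delta> > 0"
    and ineq: "\<forall>x y. nX (quartic_diff scG scX k f x y) \<le> \<delta> * (\<beta> (nG x) + \<beta> (nG y))"
begin

abbreviation "c \<equiv> (of_nat k :: 'k)"
abbreviation "a \<equiv> av c"
abbreviation "A \<equiv> av (of_nat (2 * k^4))"
abbreviation "r \<equiv> \<beta> a / a^4"
abbreviation "s \<equiv> inverse (c^4)"

lemma av1: "av 1 = 1"
proof -
  have "av 1 = av 1 * av 1" using av_mult[of 1 1] by simp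
  moreover have "av 1 \<noteq> 0" using av_zero by simp
  ultimately show ?thesis by simp
qed

lemma avm1: "av (-1) = 1"
proof -
  have "av (-1) * av (-1) = 1" using av_mult[of "-1" "-1"] av1 by simp
  then have "(av (-1) - 1) * (av (-1) + 1) = 0" by (simp add: algebra_simps)
  moreover have "av (-1) + 1 \<noteq> 0" using av_nonneg[of "-1"] by simp
  ultimately show ?thesis by simp
qed

lemma av_nat_le1: "av (of_nat n) \<le> 1"
proof (induction n)
  case 0 then show ?case using av_zero[of 0] by simp
next
  case (Suc n)
  have "av (of_nat (Suc n)) = av (1 + of_nat n)" by simp
  also have "\<dots> \<le> max (av 1) (av (of_nat n))" by (rule av_ultra)
  finally show ?case using Suc av1 by simp
qed

lemma av_power: "av (x^n) = av x ^ n"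
  by (induction n) (simp_all add: av1 av_mult)

lemma av_inverse: "x \<noteq> 0 \<Longrightarrow> av (inverse x) = inverse (av x)"
proof -
  assume "x \<noteq> 0"
  then have "av x * av (inverse x) = 1" using av_mult[of x "inverse x"] av1 by simp
  moreover have "av x \<noteq> 0" using av_zero \<open>x \<noteq> 0\<close> by simp
  ultimately show ?thesis by (simp add: field_simps)
qed

lemma c2: "(2::'k) * c^4 \<noteq> 0"
  using k_ne av_zero by (metis of_nat_mult of_nat_numeral of_nat_power)

lemma c_ne: "c \<noteq> 0" using c2 by auto
lemma two_ne: "(2::'k) \<noteq> 0" using c2 by auto

lemma A_eq: "A = av 2 * a^4"
  by (simp add: av_mult av_power)

lemma A_pos: "A > 0" using k_ne av_nonneg[of "of_nat (2 * k^4)"] by linarith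
lemma a_pos: "a > 0" using c_ne av_zero[of c] av_nonneg[of c] by linarith
lemma a_le1: "a \<le> 1" by (rule av_nat_le1)

lemma \<beta>a_nonneg: "\<beta> a \<ge> 0" using \<beta>_nonneg a_pos by simp

lemma \<beta>0: "\<beta> 0 = 0"
proof -
  have "\<beta> 0 \<le> \<beta> a * \<beta> 0" using \<beta>1 by (metis mult_zero_right order_refl)
  moreover have "\<beta> a < 1" using \<beta>2 a_pos a_le1
    by (smt (verit) power_le_one)
  moreover have "\<beta> 0 \<ge> 0" using \<beta>_nonneg by simp
  ultimately show ?thesis by (smt (verit) mult_le_cancel_right1)
qed

lemma r_nonneg: "r \<ge> 0" using \<beta>a_nonneg a_pos by simp
lemma r_less1: "r < 1" using \<beta>2 a_pos by (simp add: divide_less_eq)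

lemma \<beta>_pow: "t \<ge> 0 \<Longrightarrow> \<beta> (a^n * t) \<le> \<beta> a ^ n * \<beta> t"
proof (induction n)
  case 0 then show ?case by simp
next
  case (Suc n)
  have "\<beta> (a^Suc n * t) = \<beta> (a * (a^n * t))" by (simp add: mult.assoc)
  also have "\<dots> \<le> \<beta> a * \<beta> (a^n * t)" using \<beta>1 Suc.prems a_pos by simp
  also have "\<dots> \<le> \<beta> a * (\<beta> a ^ n * \<beta> t)"
    using Suc \<beta>a_nonneg by (simp add: mult_left_mono)
  finally show ?case by (simp add: mult.assoc)
qed

lemma nX0: "nX 0 = 0" using nX_zero by simp
lemma nX_neg: "nX (- x) = nX x"
  using nX_scale[of "-1" x] avm1 by simp
lemma nX_commute: "nX (x - y) = nX (y - x)"
  by (metis minus_diff_eq nX_neg)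
lemma nX_add: "nX (x + y) \<le> nX x + nX y"
  using nX_ultra[of x y] nX_nonneg[of x] nX_nonneg[of y] by linarith
lemma nX_diff: "nX (x - y) \<le> nX x + nX y"
  using nX_add[of x "-y"] nX_neg by simp
lemma nX_tri: "nX (x - z) \<le> max (nX (x - y)) (nX (y - z))"
  using nX_ultra[of "x - y" "y - z"] by simp

end


context qctx begin

lemma two_scale: "v + v = scX 2 v"
  using X.scale_left_distrib[of 1 1 v] by (simp add: one_add_one)

lemma coef1: "(of_nat (k^2) :: 'k) = c^2" by simp
lemma coef2: "(of_int (2 * int k^2 * (int k^2 - 1)) :: 'k) = 2*c^2*(c^2-1)" by simp
lemma coef3: "(of_int (2 * (int k^2 - 1)) :: 'k) = 2*(c^2-1)" by simp

lemma qd0: "quartic_diff scG scX k g x 0 =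
   scX 2 (g (scG c x)) - scX (2*c^4) (g x) + scX (2*(c^2-1)) (g 0)"
proof -
  have e1: "scX (c^2) (g x + g x) = scX (2*c^2) (g x)"
    by (simp add: two_scale mult.commute)
  have e2: "scX (2*c^4) (g x) = scX (2*c^2) (g x) + scX (2*c^2*(c^2-1)) (g x)"
  proof -
    have "(2::'k)*c^4 = 2*c^2 + 2*c^2*(c^2-1)" by (simp add: algebra_simps power4_eq_xxxx power2_eq_square)
    then show ?thesis by (simp add: X.scale_left_distrib)
  qed
  show ?thesis unfolding quartic_diff_def coef1 coef2 coef3
    by (simp add: two_scale[symmetric] e1 e2)
qed

lemma qd00: "quartic_diff scG scX k g 0 0 = scX (-(2*c^2*(c^2-1))) (g 0)"
proof -
  have "quartic_diff scG scX k g 0 0 = scX 2 (g 0) - scX (2*c^4) (g 0) + scX (2*(c^2-1)) (g 0)"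
    using qd0[of g 0] by simp
  also have "\<dots> = scX (2 - 2*c^4 + 2*(c^2-1)) (g 0)"
    by (simp add: X.scale_left_distrib X.scale_left_diff_distrib)
  also have "(2 - 2*c^4 + 2*(c^2-1)) = -(2*c^2*(c^2-1))"
    by (simp add: algebra_simps power4_eq_xxxx power2_eq_square)
  finally show ?thesis .
qed

lemma g0_vanish: assumes "quartic_diff scG scX k g 0 0 = 0"
  shows "scX (2*(c^2-1)) (g 0) = 0"
proof -
  have eq: "2*(c^2-1) = inverse (-(c^2)) * (-(2*c^2*(c^2-1)))"
    using c_ne by (simp add: field_simps)
  have "scX (2*(c^2-1)) (g 0) = scX (inverse (-(c^2))) (scX (-(2*c^2*(c^2-1))) (g 0))"
    using eq by (metis X.scale_scale)
  also have "\<dots> = 0" using assms qd00[of g] by (metis X.scale_zero_right)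
  finally show ?thesis .
qed

lemma qd_step: assumes "quartic_diff scG scX k g 0 0 = 0"
  shows "scX (inverse (2*c^4)) (quartic_diff scG scX k g x 0) = scX s (g (scG c x)) - g x"
proof -
  have "quartic_diff scG scX k g x 0 = scX 2 (g (scG c x)) - scX (2*c^4) (g x)"
    using qd0[of g x] g0_vanish[OF assms] by simp
  moreover have "inverse (2*c^4) * 2 = s" using two_ne by (simp add: field_simps)
  moreover have "inverse (2*c^4) * (2*c^4) = 1" using c2 by simp
  ultimately show ?thesis by (simp add: X.scale_right_diff_distrib)
qed

lemma qd_scale: "quartic_diff scG scX k (\<lambda>z. scX u (g (scG t z))) x y
   = scX u (quartic_diff scG scX k g (scG t x) (scG t y))"
proof -
  have h1: "scG t (scG c x + y) = scG c (scG t x) + scG t y"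
    by (simp add: G.scale_right_distrib mult.commute)
  have h2: "scG t (scG c x - y) = scG c (scG t x) - scG t y"
    by (simp add: G.scale_right_diff_distrib mult.commute)
  show ?thesis unfolding quartic_diff_def
    by (simp add: h1 h2 G.scale_right_distrib G.scale_right_diff_distrib
        X.scale_right_distrib X.scale_right_diff_distrib X.scale_left_commute[of u] mult.commute)
qed

lemma qd_diff: "quartic_diff scG scX k (\<lambda>z. g z - h z) x y
   = quartic_diff scG scX k g x y - quartic_diff scG scX k h x y"
  unfolding quartic_diff_def
  by (simp add: X.scale_right_distrib X.scale_right_diff_distrib algebra_simps)

lemma qd_norm: "nX (quartic_diff scG scX k g x y) \<le>
   nX (g (scG c x + y)) + nX (g (scG c x - y))
   + av (of_nat (k^2)) * (nX (g (x + y)) + nX (g (x - y)))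
   + av (of_int (2 * int k^2 * (int k^2 - 1))) * nX (g x)
   + av (of_int (2 * (int k^2 - 1))) * nX (g y)"
proof -
  define m1 :: 'k where "m1 = of_nat (k^2)"
  define m2 :: 'k where "m2 = of_int (2 * int k^2 * (int k^2 - 1))"
  define m3 :: 'k where "m3 = of_int (2 * (int k^2 - 1))"
  define P where "P = g (scG c x + y) + g (scG c x - y)"
  define R where "R = g (x + y) + g (x - y)"
  have e: "quartic_diff scG scX k g x y = P - scX m1 R - scX m2 (g x) + scX m3 (g y)"
    unfolding quartic_diff_def m1_def m2_def m3_def P_def R_def by simp
  have h1: "nX P \<le> nX (g (scG c x + y)) + nX (g (scG c x - y))" unfolding P_def by (rule nX_add)
  have h2: "nX (scX m1 R) \<le> av m1 * (nX (g (x + y)) + nX (g (x - y)))"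
    unfolding nX_scale R_def by (rule mult_left_mono[OF nX_add av_nonneg])
  have h3: "nX (P - scX m1 R) \<le> nX P + nX (scX m1 R)" by (rule nX_diff)
  have h4: "nX (P - scX m1 R - scX m2 (g x)) \<le> nX (P - scX m1 R) + nX (scX m2 (g x))" by (rule nX_diff)
  have h5: "nX (P - scX m1 R - scX m2 (g x) + scX m3 (g y)) \<le> nX (P - scX m1 R - scX m2 (g x)) + nX (scX m3 (g y))" by (rule nX_add)
  show ?thesis unfolding e m1_def[symmetric] m2_def[symmetric] m3_def[symmetric]
    using h1 h2 h3 h4 h5 nX_scale[of m2 "g x"] nX_scale[of m3 "g y"] by linarith
qed

end


context qctx begin

definition F :: "nat \<Rightarrow> 'g \<Rightarrow> 'x" where "F n x = scX (s^n) (f (scG (c^n) x))"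
definition D :: "'g \<Rightarrow> real" where "D x = (1 / A) * \<delta> * \<beta> (nG x)"

lemma nG0: "nG 0 = 0" using nG_zero by simp

lemma D_nonneg: "D x \<ge> 0"
  unfolding D_def using A_pos \<delta> \<beta>_nonneg nG_nonneg[of x] by simp

lemma A_eq2: "av (2 * c^4) = A" by simp

lemma av_s: "av s = inverse (a^4)" using c_ne by (simp add: av_inverse av_power)

lemma f00: "quartic_diff scG scX k f 0 0 = 0"
proof -
  have "nX (quartic_diff scG scX k f 0 0) \<le> 0" using ineq[rule_format, of 0 0] nG0 \<beta>0 by simp
  then have "nX (quartic_diff scG scX k f 0 0) = 0" using nX_nonneg by (intro antisym)
  then show ?thesis using nX_zero by simp
qed

lemma ofn: "(of_nat (2*k^4)::'k) = 2*c^4" by simp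

lemma key: "nX (scX s (f (scG c x)) - f x) \<le> D x"
proof -
  have "nX (scX s (f (scG c x)) - f x) = nX (scX (inverse (2*c^4)) (quartic_diff scG scX k f x 0))"
    by (simp only: qd_step[OF f00])
  also have "\<dots> = av (inverse (2*c^4)) * nX (quartic_diff scG scX k f x 0)"
    by (rule nX_scale)
  also have "av (inverse (2*c^4)) = 1/A"
    unfolding ofn using av_inverse[OF c2] by (simp only: inverse_eq_divide)
  also have "(1/A) * nX (quartic_diff scG scX k f x 0) \<le> (1/A) * (\<delta> * (\<beta> (nG x) + \<beta> (nG 0)))"
    by (rule mult_left_mono) (use ineq[rule_format, of x 0] A_pos in simp_all)
  also have "\<dots> = D x" unfolding D_def using nG0 \<beta>0 by simp
  finally show ?thesis .
qed

lemma D_scale: "inverse (a^4) ^ n * D (scG (c^n) x) \<le> r^n * D x"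
proof -
  have "D (scG (c^n) x) = (1/A) * \<delta> * \<beta> (a^n * nG x)"
    unfolding D_def by (simp add: nG_scale av_power)
  also have "\<dots> \<le> (1/A) * \<delta> * (\<beta> a ^ n * \<beta> (nG x))"
    by (rule mult_left_mono) (use \<beta>_pow[OF nG_nonneg, of n x] A_pos \<delta> in auto)
  finally have "inverse (a^4) ^ n * D (scG (c^n) x) \<le> inverse (a^4) ^ n * ((1/A) * \<delta> * (\<beta> a ^ n * \<beta> (nG x)))"
    by (rule mult_left_mono) (use a_pos in auto)
  also have "\<dots> = r^n * D x" unfolding D_def
    by (simp add: power_divide divide_inverse power_mult_distrib power_inverse)
  finally show ?thesis .
qed

lemma F0: "F 0 x = f x" unfolding F_def by simp

lemma F_step: "nX (F (Suc n) x - F n x) \<le> r^n * D x"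
proof -
  define y where "y = scG (c^n) x"
  have "F (Suc n) x - F n x = scX (s^n) (scX s (f (scG c y)) - f y)"
    unfolding F_def y_def by (simp add: X.scale_right_diff_distrib mult.commute)
  then have "nX (F (Suc n) x - F n x) = inverse (a^4) ^ n * nX (scX s (f (scG c y)) - f y)"
    by (simp add: nX_scale av_power av_s)
  also have "\<dots> \<le> inverse (a^4) ^ n * D y"
    using key a_pos by (simp add: mult_left_mono)
  also have "\<dots> \<le> r^n * D x" unfolding y_def by (rule D_scale)
  finally show ?thesis .
qed

lemma F_f: "nX (F n x - f x) \<le> D x"
proof (induction n)
  case 0 then show ?case using F0 nX0 D_nonneg by simp
next
  case (Suc n)
  have "r^n \<le> 1" by (rule power_le_one) (use r_nonneg r_less1 in auto)
  then have "r^n * D x \<le> D x" using mult_right_mono[OF _ D_nonneg, of "r^n" 1 x] by simp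
  then have "max (nX (F (Suc n) x - F n x)) (nX (F n x - f x)) \<le> D x"
    using F_step[of n x] Suc by simp
  then show ?case using nX_tri[of "F (Suc n) x" "f x" "F n x"] by (rule_tac order_trans)
qed

lemma F_cauchy0: "m \<ge> n \<Longrightarrow> nX (F m x - F n x) \<le> r^n * D x"
proof (induction m rule: dec_induct)
  case base then show ?case using nX0 r_nonneg D_nonneg by simp
next
  case (step m)
  have "r^m \<le> r^n" by (rule power_decreasing) (use step.hyps r_nonneg r_less1 in auto)
  then have "r^m * D x \<le> r^n * D x" using mult_right_mono[OF _ D_nonneg] by blast
  then have "max (nX (F (Suc m) x - F m x)) (nX (F m x - F n x)) \<le> r^n * D x"
    using F_step[of m x] step.IH by simp
  then show ?case using nX_tri[of "F (Suc m) x" "F n x" "F m x"] by (rule_tac order_trans)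
qed

lemma rn0: "(\<lambda>n. r^n * z) \<longlonglongrightarrow> 0"
  by (rule tendsto_mult_left_zero, rule LIMSEQ_power_zero) (use r_nonneg r_less1 in simp)

lemma F_cauchy: "\<exists>L. (\<lambda>n. nX (F n x - L)) \<longlonglongrightarrow> 0"
proof -
  have cy: "\<forall>e>0. \<exists>N. \<forall>m\<ge>N. \<forall>n\<ge>N. nX (F m x - F n x) < e"
  proof (intro allI impI)
    fix e :: real assume e: "e > 0"
    obtain N where N: "\<forall>n\<ge>N. norm (r^n * D x - 0) < e"
      using LIMSEQ_D[OF rn0[of "D x"] e] by blast
    have "nX (F m x - F n x) < e" if "m \<ge> N" "n \<ge> N" for m n
    proof (cases "m \<ge> n")
      case True
      have "norm (r^n * D x - 0) < e" using N that(2) by blast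
      moreover have "r^n * D x \<le> norm (r^n * D x - 0)" by simp
      ultimately show ?thesis using F_cauchy0[OF True, of x] by linarith
    next
      case False
      then have nm: "n \<ge> m" by simp
      have "norm (r^m * D x - 0) < e" using N that(1) by blast
      moreover have "r^m * D x \<le> norm (r^m * D x - 0)" by simp
      moreover have "nX (F m x - F n x) = nX (F n x - F m x)" by (rule nX_commute)
      ultimately show ?thesis using F_cauchy0[OF nm, of x] by linarith
    qed
    then show "\<exists>N. \<forall>m\<ge>N. \<forall>n\<ge>N. nX (F m x - F n x) < e" by blast
  qed
  have cw: "\<forall>s::nat \<Rightarrow> 'x. (\<forall>e>0. \<exists>N. \<forall>m\<ge>N. \<forall>n\<ge>N. nX (s m - s n) < e) \<longrightarrow>
        (\<exists>L. (\<lambda>n. nX (s n - L)) \<longlonglongrightarrow> 0)"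
    using complete unfolding complete_wrt_def .
  show ?thesis using mp[OF spec[OF cw, of "\<lambda>n. F n x"]] cy by simp
qed

definition Q :: "'g \<Rightarrow> 'x" where "Q x = (SOME L. (\<lambda>n. nX (F n x - L)) \<longlonglongrightarrow> 0)"

lemma Q_lim: "(\<lambda>n. nX (F n x - Q x)) \<longlonglongrightarrow> 0"
  unfolding Q_def using F_cauchy by (rule someI_ex)

lemma Q_bound: "nX (f x - Q x) \<le> D x"
proof -
  have "(\<lambda>n. D x + nX (F n x - Q x)) \<longlonglongrightarrow> D x + 0"
    by (intro tendsto_intros Q_lim)
  moreover have "\<forall>n. nX (f x - Q x) \<le> D x + nX (F n x - Q x)"
  proof
    fix n
    show "nX (f x - Q x) \<le> D x + nX (F n x - Q x)"
      using nX_tri[of "f x" "Q x" "F n x"] F_f[of n x] nX_commute[of "f x" "F n x"]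
        nX_nonneg[of "F n x - Q x"] D_nonneg[of x] by linarith
  qed
  ultimately show ?thesis by (intro LIMSEQ_le_const) auto
qed

end


context qctx begin

lemma F_qd: "quartic_diff scG scX k (F n) x y
   = scX (s^n) (quartic_diff scG scX k f (scG (c^n) x) (scG (c^n) y))"
proof -
  have "F n = (\<lambda>z. scX (s^n) (f (scG (c^n) z)))" by (rule ext) (simp add: F_def)
  then show ?thesis by (simp only: qd_scale)
qed

lemma F_qd_bound: "nX (quartic_diff scG scX k (F n) x y) \<le> r^n * (\<delta> * (\<beta> (nG x) + \<beta> (nG y)))"
proof -
  have "nX (quartic_diff scG scX k (F n) x y)
     = inverse (a^4) ^ n * nX (quartic_diff scG scX k f (scG (c^n) x) (scG (c^n) y))"
    unfolding F_qd nX_scale av_power av_s ..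
  also have "\<dots> \<le> inverse (a^4) ^ n * (\<delta> * (\<beta> (a^n * nG x) + \<beta> (a^n * nG y)))"
    by (rule mult_left_mono) (use ineq[rule_format, of "scG (c^n) x" "scG (c^n) y"] a_pos in
        \<open>simp_all add: nG_scale av_power\<close>)
  also have "\<dots> \<le> inverse (a^4) ^ n * (\<delta> * (\<beta> a ^ n * \<beta> (nG x) + \<beta> a ^ n * \<beta> (nG y)))"
  proof (rule mult_left_mono)
    show "\<delta> * (\<beta> (a^n * nG x) + \<beta> (a^n * nG y)) \<le> \<delta> * (\<beta> a ^ n * \<beta> (nG x) + \<beta> a ^ n * \<beta> (nG y))"
      by (rule mult_left_mono) (use \<beta>_pow[OF nG_nonneg, of n x] \<beta>_pow[OF nG_nonneg, of n y] \<delta> in auto)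
    show "0 \<le> inverse (a^4) ^ n" using a_pos by simp
  qed
  also have "\<dots> = r^n * (\<delta> * (\<beta> (nG x) + \<beta> (nG y)))"
    by (simp add: power_divide divide_inverse power_mult_distrib power_inverse algebra_simps)
  finally show ?thesis .
qed

lemma Q_lim': "(\<lambda>n. nX (Q z - F n z)) \<longlonglongrightarrow> 0"
  unfolding nX_commute[of "Q z"] by (rule Q_lim)

lemma Q_quartic: "quartic_diff scG scX k Q x y = 0"
proof -
  define m1 :: 'k where "m1 = of_nat (k^2)"
  define m2 :: 'k where "m2 = of_int (2 * int k^2 * (int k^2 - 1))"
  define m3 :: 'k where "m3 = of_int (2 * (int k^2 - 1))"
  define E where "E n = nX (Q (scG c x + y) - F n (scG c x + y)) + nX (Q (scG c x - y) - F n (scG c x - y))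
     + av m1 * (nX (Q (x + y) - F n (x + y)) + nX (Q (x - y) - F n (x - y)))
     + av m2 * nX (Q x - F n x) + av m3 * nX (Q y - F n y)
     + r^n * (\<delta> * (\<beta> (nG x) + \<beta> (nG y)))" for n
  have "E \<longlonglongrightarrow> 0 + 0 + av m1 * (0 + 0) + av m2 * 0 + av m3 * 0 + 0"
    unfolding E_def by (intro tendsto_intros Q_lim' rn0)
  then have lim: "E \<longlonglongrightarrow> 0" by simp
  have le: "nX (quartic_diff scG scX k Q x y) \<le> E n" for n
  proof -
    have "quartic_diff scG scX k Q x y
       = quartic_diff scG scX k (\<lambda>z. Q z - F n z) x y + quartic_diff scG scX k (F n) x y"
      using qd_diff[of Q "F n" x y] by simp
    then have "nX (quartic_diff scG scX k Q x y)
       \<le> nX (quartic_diff scG scX k (\<lambda>z. Q z - F n z) x y) + nX (quartic_diff scG scX k (F n) x y)"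
      by (simp add: nX_add)
    moreover note qd_norm[of "\<lambda>z. Q z - F n z" x y, folded m1_def m2_def m3_def]
    moreover note F_qd_bound[of n x y]
    ultimately show ?thesis unfolding E_def by linarith
  qed
  have "nX (quartic_diff scG scX k Q x y) \<le> 0"
    by (rule LIMSEQ_le_const[OF lim]) (use le in blast)
  then have "nX (quartic_diff scG scX k Q x y) = 0" using nX_nonneg by (intro antisym)
  then show ?thesis using nX_zero by simp
qed

lemma quartic_hom:
  assumes P: "\<forall>x y. quartic_diff scG scX k P x y = 0"
  shows "P x = scX (s^n) (P (scG (c^n) x))"
proof -
  have P00: "quartic_diff scG scX k P 0 0 = 0" using P by simp
  have step: "P z = scX s (P (scG c z))" for z
  proof -
    have "scX s (P (scG c z)) - P z = scX (inverse (2*c^4)) (quartic_diff scG scX k P z 0)"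
      using qd_step[OF P00, of z] by simp
    also have "\<dots> = 0" using P by simp
    finally show ?thesis by simp
  qed
  show ?thesis
  proof (induction n)
    case 0 then show ?case by simp
  next
    case (Suc n)
    have "P x = scX (s^n) (scX s (P (scG c (scG (c^n) x))))"
      using Suc step[of "scG (c^n) x"] by simp
    also have "\<dots> = scX (s^Suc n) (P (scG (c^Suc n) x))"
      by (simp add: mult.commute)
    finally show ?case .
  qed
qed

lemma unique:
  assumes P1: "\<forall>x y. quartic_diff scG scX k P1 x y = 0" and B1: "\<forall>x. nX (f x - P1 x) \<le> D x"
    and P2: "\<forall>x y. quartic_diff scG scX k P2 x y = 0" and B2: "\<forall>x. nX (f x - P2 x) \<le> D x"
  shows "P1 = P2"
proof
  fix x
  have le: "nX (P1 x - P2 x) \<le> r^n * D x" for n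
  proof -
    define y where "y = scG (c^n) x"
    have "P1 x - P2 x = scX (s^n) (P1 y - P2 y)"
      using quartic_hom[OF P1, of x n] quartic_hom[OF P2, of x n] unfolding y_def
      by (simp add: X.scale_right_diff_distrib)
    then have "nX (P1 x - P2 x) = inverse (a^4) ^ n * nX (P1 y - P2 y)"
      by (simp add: nX_scale av_power av_s)
    also have "\<dots> \<le> inverse (a^4) ^ n * D y"
    proof (rule mult_left_mono)
      have "nX (P1 y - P2 y) \<le> max (nX (P1 y - f y)) (nX (f y - P2 y))" by (rule nX_tri)
      moreover have "nX (P1 y - f y) \<le> D y" using B1 nX_commute[of "P1 y" "f y"] by simp
      moreover have "nX (f y - P2 y) \<le> D y" using B2 by simp
      ultimately show "nX (P1 y - P2 y) \<le> D y" by simp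
      show "0 \<le> inverse (a^4) ^ n" using a_pos by simp
    qed
    also have "\<dots> \<le> r^n * D x" unfolding y_def by (rule D_scale)
    finally show ?thesis .
  qed
  have "nX (P1 x - P2 x) \<le> 0"
    by (rule LIMSEQ_le_const[OF rn0[of "D x"]]) (use le in blast)
  then have "nX (P1 x - P2 x) = 0" using nX_nonneg by (intro antisym)
  then show "P1 x = P2 x" using nX_zero by simp
qed

end


context qctx begin
lemma main: "\<exists>!Q :: 'g \<Rightarrow> 'x. (\<forall>x y. quartic_diff scG scX k Q x y = 0) \<and>
           (\<forall>x. nX (f x - Q x) \<le> (1 / av (of_nat (2 * k^4))) * \<delta> * \<beta> (nG x))"
proof (rule ex1I[of _ Q])
  show "(\<forall>x y. quartic_diff scG scX k Q x y = 0) \<and>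
           (\<forall>x. nX (f x - Q x) \<le> (1 / av (of_nat (2 * k^4))) * \<delta> * \<beta> (nG x))"
    using Q_quartic Q_bound unfolding D_def by blast
next
  fix P assume "(\<forall>x y. quartic_diff scG scX k P x y = 0) \<and>
           (\<forall>x. nX (f x - P x) \<le> (1 / av (of_nat (2 * k^4))) * \<delta> * \<beta> (nG x))"
  then have "\<forall>x y. quartic_diff scG scX k P x y = 0" "\<forall>x. nX (f x - P x) \<le> D x"
    unfolding D_def by blast+
  moreover have "\<forall>x y. quartic_diff scG scX k Q x y = 0" "\<forall>x. nX (f x - Q x) \<le> D x"
    using Q_quartic Q_bound by blast+
  ultimately show "P = Q" by (rule unique)
qed
end


theorem corollary3p2:
  fixes av :: "'k::field \<Rightarrow> real"
    and scX :: "'k \<Rightarrow> 'x::ab_group_add \<Rightarrow> 'x" and nX :: "'x \<Rightarrow> real"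
    and scG :: "'k \<Rightarrow> 'g::ab_group_add \<Rightarrow> 'g" and nG :: "'g \<Rightarrow> real"
    and k :: nat and \<beta> :: "real \<Rightarrow> real" and \<delta> :: real
    and f :: "'g \<Rightarrow> 'x"
  assumes K: "nonarch_absval av" and K_nontriv: "nontrivial_absval av"
    and X: "nonarch_normed_space av scX nX" and X_complete: "complete_wrt nX"
    and G: "normed_space_over av scG nG"
    and k: "av (of_nat (2 * k^4)) \<noteq> 0"
    and \<beta>_nonneg: "\<forall>t\<ge>0. \<beta> t \<ge> 0"
    and \<beta>1: "\<forall>t\<ge>0. \<beta> (av (of_nat k) * t) \<le> \<beta> (av (of_nat k)) * \<beta> t"
    and \<beta>2: "\<beta> (av (of_nat k)) < av (of_nat k) ^ 4"
    and \<delta>: "\<delta> > 0"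
    and ineq: "\<forall>x y. nX (quartic_diff scG scX k f x y) \<le> \<delta> * (\<beta> (nG x) + \<beta> (nG y))"
  shows "\<exists>!Q :: 'g \<Rightarrow> 'x. (\<forall>x y. quartic_diff scG scX k Q x y = 0) \<and>
           (\<forall>x. nX (f x - Q x) \<le> (1 / av (of_nat (2 * k^4))) * \<delta> * \<beta> (nG x))"
proof -
  have vX: "vector_space scX" using X unfolding nonarch_normed_space_def by blast
  have vG: "vector_space scG" using G unfolding normed_space_over_def by blast
  have K1: "\<And>r. av r \<ge> 0" and K2: "\<And>r. av r = 0 \<longleftrightarrow> r = 0"
    and K3: "\<And>r s. av (r * s) = av r * av s" and K4: "\<And>r s. av (r + s) \<le> max (av r) (av s)"
    using K unfolding nonarch_absval_def by blast+
  have X1: "\<And>x. nX x \<ge> 0" and X2: "\<And>x. nX x = 0 \<longleftrightarrow> x = 0"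
    and X3: "\<And>r x. nX (scX r x) = av r * nX x" and X4: "\<And>x y. nX (x + y) \<le> max (nX x) (nX y)"
    using X unfolding nonarch_normed_space_def by blast+
  have G1: "\<And>x. nG x \<ge> 0" and G2: "\<And>x. nG x = 0 \<longleftrightarrow> x = 0"
    and G3: "\<And>r x. nG (scG r x) = av r * nG x"
    using G unfolding normed_space_over_def by blast+
  have ax: "qctx_axioms scX scG av nX nG k \<beta> \<delta> f"
    by (rule qctx_axioms.intro)
      (fact K1 K2 K3 K4 X1 X2 X3 X4 G1 G2 G3 X_complete k \<beta>_nonneg \<beta>1 \<beta>2 \<delta> ineq)+
  have i: "qctx scX scG av nX nG k \<beta> \<delta> f"
    by (rule qctx.intro[OF vX vG ax])
  show ?thesis by (rule qctx.main[OF i])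
qed

end
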